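(* Let $R\subseteq S$ be as in the context, with $q=|R/\mathfrak{m}|$ and $S/\mathfrak{M}=\mathbb{F}_{q^m}$. Let $1\le\ell\le q-1$ and let $\gamma$ be a primitive element of $\mathbb{F}_{q^m}$ (i.e., a generator of $\mathbb{F}_{q^m}^*$). Let $a_1,\ldots,a_\ell\in S^*$ be such that $\overline{a}_i=\gamma^{i-1}$ for $i=1,\ldots,\ell$, where $\overline{a}$ denotes the image of $a$ in $S/\mathfrak{M}$. Then $a_i-a_j^\beta\in S^*$ for all $\beta\in S^*$ and all $1\le i<j\le\ell$.
   Context: $R$ is a finite commutative chain ring with maximal ideal $\mathfrak{m}$, $q=|R/\mathfrak{m}|$; $S=R[x]/(h)$ with $h$ monic of degree $m$ irreducible modulo $\mathfrak{m}$, local with maximal ideal $\mathfrak{M}=\mathfrak{m}S$, unit group $S^*=S\setminus\mathfrak{M}$ and residue field $S/\mathfrak{M}=\mathbb{F}_{q^m}$. $\sigma$ is a ring automorphism of $S$ generating the Galois group of $R\subseteq S$, with fixed ring $R$, reducing modulo $\mathfrak{M}$ to $y\mapsto y^q$. For $a\in S$, $\beta\in S^*$: $a^\beta=\sigma(\beta)a\beta^{-1}$. *)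

theory Defs
  imports "HOL-Computational_Algebra.Polynomial"
begin

definition subring_of :: "'a::comm_ring_1 set \<Rightarrow> bool" where
  "subring_of R \<longleftrightarrow> 0 \<in> R \<and> 1 \<in> R \<and>
     (\<forall>x\<in>R. \<forall>y\<in>R. x + y \<in> R \<and> x - y \<in> R \<and> x * y \<in> R)"

definition ideal_of :: "'a::comm_ring_1 set \<Rightarrow> 'a set \<Rightarrow> bool" where
  "ideal_of R I \<longleftrightarrow> I \<subseteq> R \<and> 0 \<in> I \<and>
     (\<forall>x\<in>I. \<forall>y\<in>I. x + y \<in> I) \<and> (\<forall>r\<in>R. \<forall>x\<in>I. r * x \<in> I)"

definition chain_ring :: "'a::comm_ring_1 set \<Rightarrow> bool" where
  "chain_ring R \<longleftrightarrow> subring_of R \<and>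
     (\<forall>I J. ideal_of R I \<and> ideal_of R J \<longrightarrow> I \<subseteq> J \<or> J \<subseteq> I)"

definition max_ideal_of :: "'a::comm_ring_1 set \<Rightarrow> 'a set" where
  "max_ideal_of R = {r \<in> R. \<not> (\<exists>r'\<in>R. r * r' = 1)}"

definition ring_aut :: "('a::comm_ring_1 \<Rightarrow> 'a) \<Rightarrow> bool" where
  "ring_aut f \<longleftrightarrow> bij f \<and> f 1 = 1 \<and> (\<forall>x y. f (x + y) = f x + f y \<and> f (x * y) = f x * f y)"

definition ring_hom_fun :: "('a::comm_ring_1 \<Rightarrow> 'b::comm_ring_1) \<Rightarrow> bool" where
  "ring_hom_fun f \<longleftrightarrow> f 1 = 1 \<and> (\<forall>x y. f (x + y) = f x + f y \<and> f (x * y) = f x * f y)"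

definition galois_group :: "'a::comm_ring_1 set \<Rightarrow> ('a \<Rightarrow> 'a) set" where
  "galois_group R = {f. ring_aut f \<and> (\<forall>r\<in>R. f r = r)}"

definition irreducible_over :: "'b::field set \<Rightarrow> 'b poly \<Rightarrow> bool" where
  "irreducible_over K p \<longleftrightarrow> (\<forall>k. coeff p k \<in> K) \<and> degree p \<ge> 1 \<and>
     (\<forall>f g. (\<forall>k. coeff f k \<in> K) \<and> (\<forall>k. coeff g k \<in> K) \<and> p = f * g
        \<longrightarrow> degree f = 0 \<or> degree g = 0)"

text \<open>The twisted action a^\<beta> = \<sigma>(\<beta>) a \<beta>^{-1}; \<beta>' is the inverse of the unit \<beta>.\<close>

end

theory Submission
  imports Defs "HOL-Algebra.Multiplicative_Group"
begin

hide_const (open) UnivPoly.coeff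

definition multG :: "('b::field) monoid" where
  "multG = \<lparr>carrier = UNIV - {0}, mult = (*), one = 1\<rparr>"

lemma multG_group: "group (multG :: ('b::field) monoid)"
proof (rule groupI)
  fix x :: 'b assume "x \<in> carrier multG"
  then show "\<exists>y\<in>carrier multG. y \<otimes>\<^bsub>multG\<^esub> x = \<one>\<^bsub>multG\<^esub>"
    by (intro bexI[of _ "inverse x"]) (auto simp: multG_def)
qed (auto simp: multG_def)

lemma multG_pow: "x [^]\<^bsub>(multG :: ('b::field) monoid)\<^esub> (n::nat) = x ^ n"
proof -
  interpret group "multG :: 'b monoid" by (rule multG_group)
  show ?thesis by (induction n) (auto simp: multG_def)
qed

lemma sub_card_dvd:
  fixes H :: "'b::{field,finite} set"
  assumes "0 \<notin> H" "1 \<in> H" "\<And>x y. x \<in> H \<Longrightarrow> y \<in> H \<Longrightarrow> x * y \<in> H"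
    "\<And>x. x \<in> H \<Longrightarrow> inverse x \<in> H"
  shows "card H dvd (card (UNIV::'b set) - 1)"
proof -
  interpret group "multG :: 'b monoid" by (rule multG_group)
  have inv: "x \<in> carrier multG \<Longrightarrow> inv\<^bsub>multG\<^esub> x = inverse x" for x :: 'b
    by (rule inv_equality) (auto simp: multG_def)
  have "subgroup H multG"
  proof (rule subgroupI)
    fix x assume x: "x \<in> H"
    then have "x \<in> carrier multG" using assms(1) by (auto simp: multG_def)
    then show "inv\<^bsub>multG\<^esub> x \<in> H" using inv x assms(4) by simp
  qed (use assms in \<open>auto simp: multG_def\<close>)
  note lag = lagrange[OF this]
  have "card H dvd card (rcosets\<^bsub>multG\<^esub> H) * card H" by (rule dvd_triv_right)
  then have "card H dvd order (multG :: 'b monoid)" by (simp only: lag)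
  moreover have "order (multG :: 'b monoid) = card (UNIV::'b set) - 1"
    by (simp add: order_def multG_def card_Diff_singleton)
  ultimately show ?thesis by simp
qed

lemma gen_pow_dvd:
  fixes \<gamma> c :: "'b::{field,finite}"
  assumes gen: "\<forall>y::'b. y \<noteq> 0 \<longrightarrow> (\<exists>k::nat. y = \<gamma> ^ k)"
    and g0: "\<gamma> \<noteq> 0" and c: "c \<noteq> 0" and eq: "\<gamma> ^ k = c ^ d" and dv: "d dvd (card (UNIV::'b set) - 1)"
  shows "d dvd k"
proof -
  interpret group "multG :: 'b monoid" by (rule multG_group)
  have fin: "finite (carrier (multG :: 'b monoid))" by simp
  from g0 have gc: "\<gamma> \<in> carrier multG" by (simp add: multG_def)
  have "carrier multG \<subseteq> {\<gamma>[^]\<^bsub>multG\<^esub>x | x. x \<in> (UNIV :: nat set)}"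
  proof
    fix y assume "y \<in> carrier (multG :: 'b monoid)"
    then have "y \<noteq> 0" by (simp add: multG_def)
    then obtain k :: nat where "y = \<gamma> ^ k" using gen by blast
    then have "y = \<gamma>[^]\<^bsub>multG\<^esub>k" by (simp add: multG_pow)
    then show "y \<in> {\<gamma>[^]\<^bsub>multG\<^esub>x | x. x \<in> (UNIV :: nat set)}" by blast
  qed
  also have "\<dots> = {\<gamma>[^]\<^bsub>multG\<^esub>x | x. x \<in> {0 .. ord \<gamma> - 1}}"
    by (rule ord_elems[OF fin gc])
  also have "\<dots> = (\<lambda>x. \<gamma>[^]\<^bsub>multG\<^esub>x) ` {0 .. ord \<gamma> - 1}" by auto
  finally have cs: "carrier multG \<subseteq> (\<lambda>x. \<gamma>[^]\<^bsub>multG\<^esub>x) ` {0 .. ord \<gamma> - 1}" .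
  have "card (carrier (multG :: 'b monoid)) \<le> card ((\<lambda>x. \<gamma>[^]\<^bsub>multG\<^esub>x) ` {0 .. ord \<gamma> - 1})"
    by (rule card_mono[OF _ cs]) simp
  also have "\<dots> \<le> card {0 .. ord \<gamma> - 1}" by (rule card_image_le) simp
  finally have "card (carrier (multG :: 'b monoid)) \<le> card {0 .. ord \<gamma> - 1}" .
  then have "order (multG :: 'b monoid) \<le> ord \<gamma>"
    using ord_ge_1[OF fin gc] by (simp add: order_def)
  moreover have "ord \<gamma> \<le> order (multG :: 'b monoid)" by (rule ord_le_group_order[OF fin gc])
  ultimately have ordg: "ord \<gamma> = card (UNIV::'b set) - 1"
    by (simp add: order_def multG_def card_Diff_singleton)
  have one: "\<one>\<^bsub>(multG::'b monoid)\<^esub> = 1" by (simp add: multG_def)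
  obtain t where t: "c = \<gamma> ^ t" using gen c by blast
  have eq2: "\<gamma> ^ k = \<gamma> ^ (t * d)" using eq t by (simp add: power_mult)
  have "ord \<gamma> dvd (if k \<le> t*d then t*d - k else k - t*d)"
  proof (cases "k \<le> t*d")
    case True
    have "\<gamma> ^ k * \<gamma> ^ (t*d - k) = \<gamma> ^ k * 1"
      using True eq2 by (metis le_add_diff_inverse mult.right_neutral power_add)
    then have "\<gamma> ^ (t*d - k) = 1" using g0 by simp
    then show ?thesis using True pow_eq_id[OF gc] by (simp add: multG_pow one)
  next
    case False
    have "\<gamma> ^ (t*d) * \<gamma> ^ (k - t*d) = \<gamma> ^ (t*d) * 1"
      using False eq2 by (metis le_add_diff_inverse mult.right_neutral power_add nat_le_linear)
    then have "\<gamma> ^ (k - t*d) = 1" using g0 by simp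
    then show ?thesis using False pow_eq_id[OF gc] by (simp add: multG_pow one)
  qed
  then have dd: "d dvd (if k \<le> t*d then t*d - k else k - t*d)"
    using dv ordg by (rule_tac dvd_trans) simp_all
  have td: "d dvd t*d" by simp
  show ?thesis
  proof (cases "k \<le> t*d")
    case True
    then have "d dvd t*d - k" using dd by simp
    from dvd_diff_nat[OF td this] have "d dvd t*d - (t*d - k)" .
    then show ?thesis using True by simp
  next
    case False
    then have "d dvd k - t*d" using dd by simp
    from dvd_add[OF td this] have "d dvd t*d + (k - t*d)" .
    then show ?thesis using False by simp
  qed
qed

theorem proposition2:
  fixes R :: "'a::{comm_ring_1,finite} set"
    and h :: "'a poly" and \<xi> :: 'a and m :: nat
    and \<sigma> :: "'a \<Rightarrow> 'a"
    and red :: "'a \<Rightarrow> 'b::{field,finite}"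
    and q l :: nat and \<gamma> :: 'b and a :: "nat \<Rightarrow> 'a"
  assumes R_chain: "chain_ring R"
    and h_coeffs: "\<forall>k. coeff h k \<in> R" and h_monic: "lead_coeff h = 1"
    and h_deg: "degree h = m" and h_root: "poly h \<xi> = 0"
    and S_basis: "\<forall>s. \<exists>!c. (\<forall>k. c k \<in> R) \<and> (\<forall>k\<ge>m. c k = 0) \<and> s = (\<Sum>k<m. c k * \<xi> ^ k)"
    and red_hom: "ring_hom_fun red" and red_surj: "surj red"
    and red_ker: "\<forall>s. red s = 0 \<longleftrightarrow> \<not> s dvd 1"
    and h_irred: "irreducible_over (red ` R) (map_poly red h)"
    and q_def: "q = card (red ` R)"
    and sigma_aut: "ring_aut \<sigma>"
    and sigma_gen: "\<forall>\<tau>\<in>galois_group R. \<exists>k. \<tau> = \<sigma> ^^ k"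
    and sigma_fix: "{s. \<sigma> s = s} = R"
    and sigma_frob: "\<forall>y. red (\<sigma> y) = red y ^ q"
    and l_bounds: "1 \<le> l" "l \<le> q - 1"
    and gamma_prim: "\<forall>y::'b. y \<noteq> 0 \<longrightarrow> (\<exists>k::nat. y = \<gamma> ^ k)"
    and a_units: "\<forall>i\<in>{1..l}. a i dvd 1"
    and a_red: "\<forall>i\<in>{1..l}. red (a i) = \<gamma> ^ (i - 1)"
  shows "\<forall>\<beta> \<beta>'. \<beta> * \<beta>' = 1 \<longrightarrow>
           (\<forall>i j. 1 \<le> i \<and> i < j \<and> j \<le> l \<longrightarrow> (a i - \<sigma> \<beta> * a j * \<beta>') dvd 1)"
proof (intro allI impI)
  fix \<beta> \<beta>' :: 'a and i j :: nat
  assume bb: "\<beta> * \<beta>' = 1" and ij: "1 \<le> i \<and> i < j \<and> j \<le> l"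
  have sub: "subring_of R" using R_chain by (simp add: chain_ring_def)
  have R0: "0 \<in> R" and R1: "1 \<in> R" and Rm: "\<And>x y. x \<in> R \<Longrightarrow> y \<in> R \<Longrightarrow> x * y \<in> R"
    using sub by (auto simp: subring_of_def)
  have radd: "\<And>x y. red (x + y) = red x + red y" and rmul: "\<And>x y. red (x * y) = red x * red y"
    and r1: "red 1 = 1" using red_hom by (auto simp: ring_hom_fun_def)
  have "red 0 + red 0 = red 0 + 0" using radd[of 0 0] by simp
  then have r0: "red 0 = 0" by (rule add_left_imp_eq)
  have rminus: "\<And>x y. red (x - y) = red x - red y"
  proof -
    fix x y
    have "red x = red (x - y) + red y" using radd[of "x - y" y] by simp
    then show "red (x - y) = red x - red y" by (simp add: eq_diff_eq)
  qed
  define F where "F = red ` R"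
  have Fq: "\<And>y. y \<in> F \<Longrightarrow> y ^ q = y"
  proof -
    fix y assume "y \<in> F"
    then obtain r where r: "r \<in> R" "y = red r" by (auto simp: F_def)
    then have "\<sigma> r = r" using sigma_fix by blast
    then show "y ^ q = y" using sigma_frob r by metis
  qed
  have q2: "q \<ge> 2" using l_bounds by simp
  define H where "H = F - {0}"
  have Hm: "\<And>x y. x \<in> H \<Longrightarrow> y \<in> H \<Longrightarrow> x * y \<in> H"
  proof -
    fix x y assume "x \<in> H" "y \<in> H"
    then obtain r s where "r \<in> R" "s \<in> R" "x = red r" "y = red s" "x \<noteq> 0" "y \<noteq> 0"
      by (auto simp: H_def F_def)
    then show "x * y \<in> H" using Rm rmul
      by (auto simp: H_def F_def intro!: image_eqI[of _ red "r * s"])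
  qed
  have H1: "1 \<in> H" using R1 r1 by (auto simp: H_def F_def intro: image_eqI[of _ _ 1])
  have Hp: "\<And>x n. x \<in> H \<Longrightarrow> x ^ n \<in> H"
  proof -
    fix x :: 'b and n :: nat assume "x \<in> H"
    then show "x ^ n \<in> H" by (induction n) (auto simp: H1 Hm)
  qed
  have Hi: "\<And>x. x \<in> H \<Longrightarrow> inverse x \<in> H"
  proof -
    fix x assume x: "x \<in> H"
    then have "x ^ q = x" "x \<noteq> 0" using Fq by (auto simp: H_def)
    moreover have "x ^ q = x ^ (q - 2) * x * x"
    proof -
      have "q = Suc (Suc (q - 2))" using q2 by simp
      then have "x ^ q = x ^ Suc (Suc (q - 2))" by simp
      also have "\<dots> = x ^ (q - 2) * x * x" by (simp add: power_Suc2 mult.assoc)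
      finally show ?thesis .
    qed
    ultimately have "x ^ (q - 2) * x = 1" by (metis mult_cancel_right2)
    then have "inverse x = x ^ (q - 2)" using \<open>x \<noteq> 0\<close> by (simp add: field_simps)
    then show "inverse x \<in> H" using Hp x by simp
  qed
  have H0: "0 \<notin> H" by (simp add: H_def)
  have cardH: "card H = q - 1"
  proof -
    have "0 \<in> F" using R0 r0 by (auto simp: F_def intro: image_eqI[of _ _ 0])
    then show ?thesis using q_def by (simp add: H_def F_def card_Diff_singleton)
  qed
  have qdvd: "(q - 1) dvd (card (UNIV::'b set) - 1)"
    using sub_card_dvd[OF H0 H1 Hm Hi] cardH by simp
  show "(a i - \<sigma> \<beta> * a j * \<beta>') dvd 1"
  proof (rule ccontr)
    assume "\<not> (a i - \<sigma> \<beta> * a j * \<beta>') dvd 1"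
    then have z: "red (a i - \<sigma> \<beta> * a j * \<beta>') = 0" using red_ker by blast
    define b where "b = red \<beta>"
    define c where "c = red \<beta>'"
    have bc: "b * c = 1" using bb r1 rmul by (metis b_def c_def)
    have ai: "red (a i) = \<gamma> ^ (i - 1)" and aj: "red (a j) = \<gamma> ^ (j - 1)"
      using a_red ij l_bounds by auto
    have e1: "\<gamma> ^ (i - 1) = b ^ q * \<gamma> ^ (j - 1) * c"
      using z ai aj sigma_frob rminus rmul by (simp add: b_def c_def)
    have "b ^ q * c = b ^ (q - 1)"
    proof -
      have "q = Suc (q - 1)" using q2 by simp
      then have "b ^ q * c = b ^ (q - 1) * (b * c)" by (metis power_Suc2 mult.assoc)
      then show ?thesis using bc by simp
    qed
    then have e2: "\<gamma> ^ (i - 1) = b ^ (q - 1) * \<gamma> ^ (j - 1)" using e1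
      by (metis mult.commute mult.left_commute)
    have "(b * c) ^ (q - 1) = 1" using bc by simp
    then have "c ^ (q - 1) * b ^ (q - 1) = 1" by (simp add: power_mult_distrib mult.commute)
    note cb1 = this
    have "c ^ (q - 1) * \<gamma> ^ (i - 1) = c ^ (q - 1) * (b ^ (q - 1) * \<gamma> ^ (j - 1))"
      using e2 by (rule arg_cong)
    also have "\<dots> = (c ^ (q - 1) * b ^ (q - 1)) * \<gamma> ^ (j - 1)" by (simp only: mult.assoc)
    also have "\<dots> = \<gamma> ^ (j - 1)" by (simp only: cb1 mult_1_left)
    finally have "c ^ (q - 1) * \<gamma> ^ (i - 1) = \<gamma> ^ (j - 1)" .
    moreover have "\<gamma> ^ (j - 1) = \<gamma> ^ (i - 1) * \<gamma> ^ (j - i)"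
    proof -
      have "j - 1 = (i - 1) + (j - i)" using ij by arith
      then show ?thesis by (metis power_add)
    qed
    moreover have gnz: "\<gamma> \<noteq> 0"
    proof
      assume "\<gamma> = 0"
      then have "red (a j) = 0" using aj ij by simp
      then show False using red_ker a_units ij l_bounds by auto
    qed
    ultimately have "\<gamma> ^ (j - i) = c ^ (q - 1)" by (simp add: mult.commute)
    moreover have "c \<noteq> 0" using bc by auto
    ultimately have "(q - 1) dvd (j - i)"
      using gen_pow_dvd[OF gamma_prim gnz _ _ qdvd] by blast
    moreover have "0 < j - i" "j - i < q - 1" using ij l_bounds by auto
    ultimately show False by (simp add: nat_dvd_not_less)
  qed
qed

end
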